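(* For every $n\ge1$, the number of non-squashing stacks whose largest box has label exactly $n$ equals $b(2n)$; that is, $f(n)-f(n-1)=b(2n)$. Equivalently, there is a bijection between sets $\{p_1<\cdots<p_k=n\}$ of positive integers with $p_1+\cdots+p_j\le p_{j+1}$ for $1\le j\le k-1$ and non-squashing partitions of $2n$ into distinct parts.
   Context: A partition $n=p_1+\cdots+p_k$ with $1\le p_1\le\cdots\le p_k$ is non-squashing if $p_1+\cdots+p_j\le p_{j+1}$ for all $1\le j\le k-1$; $b(n)$ is the number of non-squashing partitions of $n$ into distinct parts ($b(0)=1$). A non-squashing stack with labels at most $n$ is a (possibly empty) set of distinct integers $1\le p_1<p_2<\cdots<p_k\le n$ satisfying $p_1+\cdots+p_j\le p_{j+1}$ for $1\le j\le k-1$. $f(n)$ denotes the number of such stacks (so $f(0)=1$, counting the empty stack). *)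

theory Defs
  imports Main
begin

definition nonsquashing :: "nat list \<Rightarrow> bool" where
  "nonsquashing xs \<longleftrightarrow> (\<forall>j. 0 < j \<and> j < length xs \<longrightarrow> sum_list (take j xs) \<le> xs ! j)"

definition ns_stacks :: "nat \<Rightarrow> nat list set" where
  "ns_stacks n = {xs. sorted_wrt (<) xs \<and> set xs \<subseteq> {1..n} \<and> nonsquashing xs}"

definition f :: "nat \<Rightarrow> nat" where
  "f n = card (ns_stacks n)"

definition ns_distinct_partitions :: "nat \<Rightarrow> nat list set" where
  "ns_distinct_partitions n =
     {xs. sorted_wrt (<) xs \<and> 0 \<notin> set xs \<and> sum_list xs = n \<and> nonsquashing xs}"

definition b :: "nat \<Rightarrow> nat" where
  "b n = card (ns_distinct_partitions n)"

end

theory Submission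
  imports Defs
begin

lemma ns_snoc:
  "nonsquashing (ys @ [x]) \<longleftrightarrow> nonsquashing ys \<and> (ys \<noteq> [] \<longrightarrow> sum_list ys \<le> x)"
proof
  assume H: "nonsquashing (ys @ [x])"
  have "nonsquashing ys"
    unfolding nonsquashing_def
  proof (intro allI impI)
    fix j assume j: "0 < j \<and> j < length ys"
    have "sum_list (take j (ys @ [x])) \<le> (ys @ [x]) ! j"
      using H j unfolding nonsquashing_def by auto
    then show "sum_list (take j ys) \<le> ys ! j" using j by (simp add: nth_append)
  qed
  moreover have "ys \<noteq> [] \<longrightarrow> sum_list ys \<le> x"
  proof
    assume "ys \<noteq> []"
    then have "sum_list (take (length ys) (ys @ [x])) \<le> (ys @ [x]) ! (length ys)"
      using H unfolding nonsquashing_def by auto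
    then show "sum_list ys \<le> x" by simp
  qed
  ultimately show "nonsquashing ys \<and> (ys \<noteq> [] \<longrightarrow> sum_list ys \<le> x)" by blast
next
  assume H: "nonsquashing ys \<and> (ys \<noteq> [] \<longrightarrow> sum_list ys \<le> x)"
  show "nonsquashing (ys @ [x])"
    unfolding nonsquashing_def
  proof (intro allI impI)
    fix j assume j: "0 < j \<and> j < length (ys @ [x])"
    show "sum_list (take j (ys @ [x])) \<le> (ys @ [x]) ! j"
    proof (cases "j < length ys")
      case True
      then show ?thesis using H j unfolding nonsquashing_def by (simp add: nth_append)
    next
      case False
      then have "j = length ys" using j by simp
      then show ?thesis using H j by auto
    qed
  qed
qed

lemma finite_stacks: "finite (ns_stacks n)"
proof -
  have "ns_stacks n \<subseteq> {xs. set xs \<subseteq> {1..n} \<and> length xs \<le> n}"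
  proof
    fix xs assume "xs \<in> ns_stacks n"
    then have d: "distinct xs" and s: "set xs \<subseteq> {1..n}"
      unfolding ns_stacks_def by (auto simp: strict_sorted_iff)
    have "length xs = card (set xs)" using d by (simp add: distinct_card)
    also have "\<dots> \<le> card {1..n}" using s by (intro card_mono) auto
    finally show "xs \<in> {xs. set xs \<subseteq> {1..n} \<and> length xs \<le> n}" using s by simp
  qed
  moreover have "finite {xs. set xs \<subseteq> {1..n} \<and> length xs \<le> n}"
    by (rule finite_lists_length_le) simp
  ultimately show ?thesis by (rule finite_subset)
qed

lemma part1:
  assumes "n \<ge> 1"
  shows "card {xs \<in> ns_stacks n. xs \<noteq> [] \<and> last xs = n} = b (2 * n)"
proof -
  define A where "A = {xs \<in> ns_stacks n. xs \<noteq> [] \<and> last xs = n}"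
  define g where "g = (\<lambda>xs::nat list. butlast xs @ [2 * n - sum_list (butlast xs)])"
  define h where "h = (\<lambda>xs::nat list. butlast xs @ [n])"
  have "bij_betw g A (ns_distinct_partitions (2 * n))"
  proof (rule bij_betw_byWitness[where f' = h])
    show "\<forall>a\<in>A. h (g a) = a"
    proof
      fix a assume "a \<in> A"
      then have "a \<noteq> [] \<and> last a = n" unfolding A_def by blast
      then have "a = butlast a @ [n]" by (metis append_butlast_last_id)
      then show "h (g a) = a" unfolding g_def h_def by simp
    qed
    show "\<forall>a\<in>ns_distinct_partitions (2 * n). g (h a) = a"
    proof
      fix a assume a: "a \<in> ns_distinct_partitions (2 * n)"
      then have "a \<noteq> []" using assms unfolding ns_distinct_partitions_def by auto
      then have "a = butlast a @ [last a]" by simp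
      then obtain ys q where aq: "a = ys @ [q]" by blast
      have ns: "nonsquashing ys \<and> (ys \<noteq> [] \<longrightarrow> sum_list ys \<le> q)" and sm: "sum_list ys + q = 2 * n"
        using a unfolding aq ns_distinct_partitions_def by (auto simp: ns_snoc)
      have "sum_list ys \<le> q" using ns by (cases "ys = []") auto
      then have "2 * n - sum_list ys = q" using sm by simp
      then show "g (h a) = a" unfolding g_def h_def aq by simp
    qed
    show "g ` A \<subseteq> ns_distinct_partitions (2 * n)"
    proof
      fix x assume "x \<in> g ` A"
      then obtain a where a: "a \<in> A" and x: "x = g a" by blast
      then have "a \<noteq> [] \<and> last a = n" unfolding A_def by blast
      then have "a = butlast a @ [n]" by (metis append_butlast_last_id)
      then obtain ys where aq: "a = ys @ [n]" by blast
      have P: "sorted_wrt (<) ys" "\<forall>y\<in>set ys. y < n" "set ys \<subseteq> {1..n}" "nonsquashing ys"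
           "ys \<noteq> [] \<longrightarrow> sum_list ys \<le> n"
        using a unfolding A_def aq ns_stacks_def by (auto simp: sorted_wrt_append ns_snoc)
      have S: "sum_list ys \<le> n" using P(5) by (cases "ys = []") auto
      have x2: "x = ys @ [2 * n - sum_list ys]" unfolding x g_def aq by simp
      show "x \<in> ns_distinct_partitions (2 * n)"
        unfolding x2 ns_distinct_partitions_def
        using P S assms by (auto simp: sorted_wrt_append ns_snoc)
    qed
    show "h ` ns_distinct_partitions (2 * n) \<subseteq> A"
    proof
      fix x assume "x \<in> h ` ns_distinct_partitions (2 * n)"
      then obtain a where a: "a \<in> ns_distinct_partitions (2 * n)" and x: "x = h a" by blast
      then have "a \<noteq> []" using assms unfolding ns_distinct_partitions_def by auto
      then have "a = butlast a @ [last a]" by simp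
      then obtain ys q where aq: "a = ys @ [q]" by blast
      have P: "sorted_wrt (<) ys" "\<forall>y\<in>set ys. y < q" "0 \<notin> set ys" "nonsquashing ys"
           "ys \<noteq> [] \<longrightarrow> sum_list ys \<le> q" "sum_list ys + q = 2 * n"
        using a unfolding aq ns_distinct_partitions_def by (auto simp: sorted_wrt_append ns_snoc)
      have S: "sum_list ys \<le> n" using P(5,6) by (cases "ys = []") auto
      have lt: "y < n" if "y \<in> set ys" for y
      proof -
        have "y \<le> sum_list ys" using that by (simp add: member_le_sum_list)
        moreover have "y < q" using P(2) that by blast
        ultimately show ?thesis using S P(6) by linarith
      qed
      have pos: "y \<ge> 1" if "y \<in> set ys" for y
        using P(3) that by (cases y) auto
      have x2: "x = ys @ [n]" unfolding x h_def aq by simp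
      show "x \<in> A"
        unfolding x2 A_def ns_stacks_def
        using P S assms lt pos by (auto simp: sorted_wrt_append ns_snoc less_imp_le)
    qed
  qed
  then show ?thesis unfolding A_def b_def by (rule bij_betw_same_card)
qed

lemma part2:
  assumes "n \<ge> 1"
  shows "ns_stacks n = ns_stacks (n - 1) \<union> {xs \<in> ns_stacks n. xs \<noteq> [] \<and> last xs = n}"
    and "ns_stacks (n - 1) \<inter> {xs \<in> ns_stacks n. xs \<noteq> [] \<and> last xs = n} = {}"
proof -
  show "ns_stacks (n - 1) \<inter> {xs \<in> ns_stacks n. xs \<noteq> [] \<and> last xs = n} = {}"
    using assms unfolding ns_stacks_def by (auto dest!: last_in_set)
  show "ns_stacks n = ns_stacks (n - 1) \<union> {xs \<in> ns_stacks n. xs \<noteq> [] \<and> last xs = n}"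
  proof (intro equalityI subsetI)
    fix xs assume xs: "xs \<in> ns_stacks n"
    show "xs \<in> ns_stacks (n - 1) \<union> {xs \<in> ns_stacks n. xs \<noteq> [] \<and> last xs = n}"
    proof (cases "n \<in> set xs")
      case True
      then have ne: "xs \<noteq> []" by auto
      then have e: "xs = butlast xs @ [last xs]" by simp
      have sw: "sorted_wrt (<) xs" using xs unfolding ns_stacks_def by auto
      have "\<forall>y\<in>set (butlast xs). y < last xs"
        using sw e by (metis sorted_wrt_append list.set_intros(1))
      moreover have "last xs \<le> n" using xs ne last_in_set unfolding ns_stacks_def by fastforce
      ultimately have "last xs = n" using True e
        by (metis Un_iff empty_iff empty_set le_neq_implies_less less_asym list.set_intros(1) set_ConsD set_append)
      then show ?thesis using xs ne by auto
    next
      case False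
      have "set xs \<subseteq> {1..n - 1}"
      proof
        fix y assume "y \<in> set xs"
        then have "y \<in> {1..n}" "y \<noteq> n" using xs False unfolding ns_stacks_def
          by auto
        then show "y \<in> {1..n - 1}" by auto
      qed
      then show ?thesis using xs unfolding ns_stacks_def by blast
    qed
  next
    fix xs assume "xs \<in> ns_stacks (n - 1) \<union> {xs \<in> ns_stacks n. xs \<noteq> [] \<and> last xs = n}"
    moreover have "{1..n - 1} \<subseteq> {1..n}" by auto
    ultimately show "xs \<in> ns_stacks n" unfolding ns_stacks_def by blast
  qed
qed

theorem mainTheorem9:
  fixes n :: nat
  assumes "n \<ge> 1"
  shows "card {xs \<in> ns_stacks n. xs \<noteq> [] \<and> last xs = n} = b (2 * n)
         \<and> int (f n) - int (f (n - 1)) = int (b (2 * n))"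
proof -
  have c: "f n = f (n - 1) + card {xs \<in> ns_stacks n. xs \<noteq> [] \<and> last xs = n}"
    unfolding f_def
    apply (subst part2(1)[OF assms])
    apply (rule card_Un_disjoint)
      apply (rule finite_stacks)
     apply (rule finite_subset[OF _ finite_stacks[of n]], blast)
    apply (rule part2(2)[OF assms])
    done
  show ?thesis using c part1[OF assms] by simp
qed

end
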